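(* A function $h\colon\operatorname{AdS}_n\to\mathbb{Z}$ is equal to $h_D$ for some delta-matroid $D$ on $[n,\overline{n}]$ if and only if (1) $h(\emptyset)=0$; (2) $h(S)\in\{0,1\}$ for every $S\in\operatorname{AdS}_n$ with $|S|=1$; (3) $h(S)+h(T)\ge h(S\cap T)+h(S\sqcup T)+|S\cap\overline{T}|/2$ for all $S,T\in\operatorname{AdS}_n$.
   Context: Let $[n,\overline{n}]=\{1,\dots,n,\overline{1},\dots,\overline{n}\}$ with involution $a\mapsto\overline{a}$; $\overline{S}=\{\overline{a}:a\in S\}$. A subset is admissible if it contains at most one of $i,\overline{i}$ for each $i$; $\operatorname{AdS}_n$ is the set of admissible subsets. For $S,T\in\operatorname{AdS}_n$, $S\sqcup T=\{a\in S\cup T:\overline{a}\notin S\cup T\}$. In $\mathbb{R}^n$ set $e_{\overline{i}}=-e_i$, $e_S=\sum_{a\in S}e_a$. A delta-matroid $D$ on $[n,\overline{n}]$ is a nonempty collection $\mathcal{F}$ of admissible sets of size $n$ (feasible sets) such that $\operatorname{Conv}\{e_B:B\in\mathcal{F}\}$ has all edges parallel to some $e_i$ or $e_i\pm e_j$. Its rank function is $g_D(S)=\max_{B\in\mathcal{F}}(|S\cap B|-|\overline{S}\cap B|)$, and $h_D(S):=\frac{g_D(S)+|S|}{2}$ for $S\in\operatorname{AdS}_n$. *)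

theory Defs
  imports "HOL-Analysis.Analysis"
begin

text \<open>The ground set [n, nbar] is modelled as the type 'n \<times> bool, where
  'n is a finite type with CARD('n) = n: (i, True) stands for i and
  (i, False) stands for nbar i.\<close>

definition bar :: "'n \<times> bool \<Rightarrow> 'n \<times> bool" where
  "bar a = (fst a, \<not> snd a)"

definition barset :: "('n \<times> bool) set \<Rightarrow> ('n \<times> bool) set" where
  "barset S = bar ` S"

definition admissible :: "('n \<times> bool) set \<Rightarrow> bool" where
  "admissible S \<longleftrightarrow> (\<forall>a\<in>S. bar a \<notin> S)"

definition sqcup :: "('n \<times> bool) set \<Rightarrow> ('n \<times> bool) set \<Rightarrow> ('n \<times> bool) set" where
  "sqcup S T = {a \<in> S \<union> T. bar a \<notin> S \<union> T}"

definition evec :: "('n::finite) \<times> bool \<Rightarrow> real^'n" where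
  "evec a = (if snd a then 1 else -1) *\<^sub>R axis (fst a) 1"

definition eset :: "('n::finite \<times> bool) set \<Rightarrow> real^'n" where
  "eset S = (\<Sum>a\<in>S. evec a)"

definition is_poly_edge :: "(real^'n::finite) set \<Rightarrow> (real^'n) set \<Rightarrow> bool" where
  "is_poly_edge E P \<longleftrightarrow> E face_of P \<and> aff_dim E = 1"

definition parallel_to :: "(real^'n::finite) set \<Rightarrow> real^'n \<Rightarrow> bool" where
  "parallel_to E v \<longleftrightarrow> (\<forall>x\<in>E. \<forall>y\<in>E. \<exists>c::real. x - y = c *\<^sub>R v)"

definition delta_matroid :: "('n::finite \<times> bool) set set \<Rightarrow> bool" where
  "delta_matroid F \<longleftrightarrow>
     F \<noteq> {} \<and>
     (\<forall>B\<in>F. admissible B \<and> card B = CARD('n)) \<and>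
     (\<forall>E. is_poly_edge E (convex hull (eset ` F)) \<longrightarrow>
        (\<exists>i. parallel_to E (axis i 1)) \<or>
        (\<exists>i j. i \<noteq> j \<and> (parallel_to E (axis i 1 + axis j 1)
                           \<or> parallel_to E (axis i 1 - axis j 1))))"

definition rank_g :: "('n::finite \<times> bool) set set \<Rightarrow> ('n \<times> bool) set \<Rightarrow> int" where
  "rank_g F S = Max ((\<lambda>B. int (card (S \<inter> B)) - int (card (barset S \<inter> B))) ` F)"

definition rank_h :: "('n::finite \<times> bool) set set \<Rightarrow> ('n \<times> bool) set \<Rightarrow> real" where
  "rank_h F S = (real_of_int (rank_g F S) + real (card S)) / 2"

end

theory Submission
  imports Defs
begin

lemma evec_nth: "evec a $ k = (if fst a = k then (if snd a then 1 else -1) else 0)"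
  by (simp add: evec_def axis_def)

lemma eset_nth: "eset X $ k = (if (k,True) \<in> X then 1 else 0) - (if (k,False) \<in> X then 1 else 0)"
proof -
  have "eset X $ k = (\<Sum>a\<in>X. evec a $ k)" by (simp add: eset_def)
  also have "\<dots> = (\<Sum>a\<in>X \<inter> {(k,True),(k,False)}. evec a $ k)"
    by (rule sum.mono_neutral_right) (auto simp: evec_nth)
  also have "\<dots> = (if (k,True) \<in> X then 1 else 0) - (if (k,False) \<in> X then 1 else 0)"
    by (cases "(k,True) \<in> X"; cases "(k,False) \<in> X") (auto simp: evec_nth Int_insert_right)
  finally show ?thesis .
qed

lemma bar_bar[simp]: "bar (bar a) = a" by (simp add: bar_def)
lemma bar_neq[simp]: "bar a \<noteq> a" "a \<noteq> bar a" by (auto simp: bar_def prod_eq_iff)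
lemma bar_inj: "bar a = bar b \<longleftrightarrow> a = b" by (metis bar_bar)
lemma mem_barset: "x \<in> barset S \<longleftrightarrow> bar x \<in> S"
  by (auto simp: barset_def image_iff) (metis bar_bar)
lemma bar_pair[simp]: "bar (k,b) = (k, \<not> b)" by (simp add: bar_def)

lemma card_split:
  fixes X :: "('n::finite \<times> bool) set"
  shows "real (card X) = (\<Sum>k\<in>UNIV. (if (k,True) \<in> X then 1 else 0) + (if (k,False) \<in> X then 1 else 0))"
proof -
  have "real (card X) = (\<Sum>a\<in>UNIV. if a \<in> X then 1 else 0)"
    by (simp add: sum.If_cases)
  also have "\<dots> = (\<Sum>a\<in>UNIV \<times> UNIV. if a \<in> X then 1 else 0)"
    by (simp add: UNIV_Times_UNIV)
  also have "\<dots> = (\<Sum>k\<in>UNIV. \<Sum>b\<in>UNIV. if (k,b) \<in> X then 1 else 0)"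
    by (simp add: sum.cartesian_product)
  also have "\<dots> = (\<Sum>k\<in>UNIV. (if (k,True) \<in> X then 1 else 0) + (if (k,False) \<in> X then 1 else 0))"
    by (simp add: UNIV_bool add.commute)
  finally show ?thesis .
qed

lemma inner_eset:
  fixes S B :: "('n::finite \<times> bool) set"
  shows "eset S \<bullet> eset B = real (card (S \<inter> B)) - real (card (barset S \<inter> B))"
proof -
  have "eset S \<bullet> eset B = (\<Sum>k\<in>UNIV. eset S $ k * eset B $ k)" by (simp add: inner_vec_def)
  also have "\<dots> = (\<Sum>k\<in>UNIV. ((if (k,True) \<in> S \<inter> B then 1 else 0) + (if (k,False) \<in> S \<inter> B then 1 else 0))
       - ((if (k,True) \<in> barset S \<inter> B then 1 else 0) + (if (k,False) \<in> barset S \<inter> B then 1 else 0)))"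
    by (rule sum.cong) (auto simp: eset_nth mem_barset)
  also have "\<dots> = real (card (S \<inter> B)) - real (card (barset S \<inter> B))"
    by (simp only: card_split sum_subtractf)
  finally show ?thesis .
qed

lemma edge_at_vertex:
  fixes G :: "'a::euclidean_space set"
  assumes "polytope G" "v extreme_point_of G" "aff_dim G \<ge> 1"
  shows "\<exists>E. E face_of G \<and> aff_dim E = 1 \<and> v \<in> E"
proof -
  have "\<And>G. nat (aff_dim G) = m \<Longrightarrow> polytope G \<Longrightarrow> v extreme_point_of G \<Longrightarrow> aff_dim G \<ge> 1 \<Longrightarrow>
      \<exists>E. E face_of G \<and> aff_dim E = 1 \<and> v \<in> E" for m
  proof (induction m rule: less_induct)
    case (less m G)
    show ?case
    proof (cases "aff_dim G = 1")
      case True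
      then show ?thesis
        using less.prems by (metis extreme_point_of_def face_of_refl polytope_imp_convex)
    next
      case False
      then have ge2: "aff_dim G \<ge> 2" using less.prems by linarith
      have vf: "{v} face_of G" using less.prems face_of_singleton by blast
      have "{v} \<noteq> G" using ge2 by auto
      then obtain Fa where Fa: "Fa facet_of G" "{v} \<subseteq> Fa"
        using face_of_polyhedron_subset_facet[OF polytope_imp_polyhedron[OF less.prems(2)] vf]
        by blast
      have Faf: "Fa face_of G" and adFa: "aff_dim Fa = aff_dim G - 1"
        using Fa(1) by (auto simp: facet_of_def)
      have "polytope Fa" using face_of_polytope_polytope Faf less.prems(2) by blast
      moreover have "v extreme_point_of Fa"
        using Fa(2) Faf extreme_point_of_face less.prems(3) by blast
      moreover have "nat (aff_dim Fa) < m" using adFa ge2 less.prems(1) by linarith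
      moreover have "aff_dim Fa \<ge> 1" using adFa ge2 by linarith
      ultimately obtain E where "E face_of Fa" "aff_dim E = 1" "v \<in> E"
        using less.IH by blast
      then show ?thesis using Faf face_of_trans by blast
    qed
  qed
  then show ?thesis using assms by blast
qed

definition cube :: "real^'n \<Rightarrow> bool" where
  "cube p \<longleftrightarrow> (\<forall>k. p$k = 1 \<or> p$k = -1)"

definition flip :: "'n \<Rightarrow> 'n \<Rightarrow> real^'n \<Rightarrow> real^'n" where
  "flip i j p = (\<chi> k. if k = i \<or> k = j then - p$k else p$k)"

lemma cube_inner_self: "cube (p::real^'n::finite) \<Longrightarrow> p \<bullet> p = real CARD('n)"
proof -
  assume "cube p"
  then have "\<And>k. p$k * p$k = 1" by (metis cube_def mult_1 mult_minus1 minus_minus)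
  then show ?thesis by (simp add: inner_vec_def)
qed

lemma cube_inner_other:
  assumes "cube (p::real^'n::finite)" "cube q" "p \<noteq> q"
  shows "p \<bullet> q \<le> real CARD('n) - 2"
proof -
  obtain k0 where k0: "p$k0 \<noteq> q$k0" using assms(3) by (metis vec_eq_iff)
  have t: "\<And>k. p$k * q$k \<le> 1" using assms(1,2) unfolding cube_def by (metis mult_1 mult_minus1 minus_minus order_refl le_minus_one_simps(2) le_minus_one_simps(4) one_neq_neg_one)
  have t0: "p$k0 * q$k0 = -1" using assms(1,2) k0 unfolding cube_def by (metis mult_1 mult_minus1 minus_minus)
  have "p \<bullet> q = p$k0 * q$k0 + (\<Sum>k\<in>UNIV - {k0}. p$k * q$k)"
    by (simp add: inner_vec_def sum.remove)
  also have "(\<Sum>k\<in>UNIV - {k0}. p$k * q$k) \<le> (\<Sum>k\<in>UNIV - {k0}. 1)"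
    by (rule sum_mono) (use t in auto)
  also have "(\<Sum>k\<in>UNIV - {k0}. (1::real)) = real CARD('n) - 1"
    by (simp add: card_Diff_singleton of_nat_diff)
  finally show ?thesis using t0 by simp
qed

lemma cube_extreme:
  fixes V :: "(real^'n::finite) set"
  assumes "finite V" "\<forall>p\<in>V. cube p" "p \<in> V"
  shows "p extreme_point_of convex hull V"
proof -
  have "convex hull (V - {p}) \<subseteq> {x. p \<bullet> x \<le> real CARD('n) - 2}"
    by (rule hull_minimal) (use assms cube_inner_other in \<open>auto simp: convex_halfspace_le\<close>)
  moreover have "p \<bullet> p = real CARD('n)" using assms cube_inner_self by blast
  ultimately have "p \<notin> convex hull (V - {p})" by force
  then have "p extreme_point_of convex hull (insert p (V - {p}))"
    using extreme_point_of_convex_hull_insert assms(1) by blast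
  then show ?thesis using assms(3) by (simp add: insert_absorb)
qed

definition EC :: "(real^'n::finite) set \<Rightarrow> bool" where
 "EC P \<longleftrightarrow> (\<forall>E. is_poly_edge E P \<longrightarrow>
        (\<exists>i. parallel_to E (axis i 1)) \<or>
        (\<exists>i j. i \<noteq> j \<and> (parallel_to E (axis i 1 + axis j 1)
                           \<or> parallel_to E (axis i 1 - axis j 1))))"

lemma delta_matroid_EC: "delta_matroid F \<longleftrightarrow> F \<noteq> {} \<and>
     (\<forall>B\<in>F. admissible B \<and> card B = CARD('n)) \<and> EC (convex hull (eset ` F))"
  for F :: "('n::finite \<times> bool) set set"
  unfolding delta_matroid_def EC_def by blast

lemma cube_neq: "cube p \<Longrightarrow> cube r \<Longrightarrow> r$k \<noteq> p$k \<Longrightarrow> r$k = - p$k"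
  unfolding cube_def by (metis minus_minus)

lemma flip_char:
  assumes "cube p" "cube r" "\<And>k. r$k \<noteq> p$k \<longleftrightarrow> (k = i \<or> k = j)"
  shows "r = flip i j p"
  unfolding flip_def vec_eq_iff using assms cube_neq by auto

lemma parallel_flip:
  fixes p r :: "real^'n::finite"
  assumes cp: "cube p" and cr: "cube r" and rp: "r \<noteq> p" and E: "p \<in> E" "r \<in> E"
    and par: "(\<exists>i. parallel_to E (axis i 1)) \<or>
        (\<exists>i j. i \<noteq> j \<and> (parallel_to E (axis i 1 + axis j 1)
                           \<or> parallel_to E (axis i 1 - axis j 1)))"
  shows "\<exists>i j. r = flip i j p"
  using par
proof (elim disjE exE)
  fix i :: 'n assume "parallel_to E (axis i 1)"
  then obtain c where c: "r - p = c *\<^sub>R axis i 1" using E unfolding parallel_to_def by blast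
  have "\<And>k. r$k \<noteq> p$k \<longleftrightarrow> (k = i \<or> k = i)"
  proof -
    fix k
    have "r$k - p$k = (if k = i then c else 0)" using c by (simp add: vec_eq_iff axis_def)
    moreover have "c \<noteq> 0" using c rp by auto
    ultimately show "r$k \<noteq> p$k \<longleftrightarrow> (k = i \<or> k = i)" by (auto split: if_splits)
  qed
  then show ?thesis using flip_char[OF cp cr] by blast
next
  fix i j :: 'n assume ijo: "i \<noteq> j \<and> (parallel_to E (axis i 1 + axis j 1) \<or> parallel_to E (axis i 1 - axis j 1))"
  then have ij: "i \<noteq> j" and orr: "parallel_to E (axis i 1 + axis j 1) \<or> parallel_to E (axis i 1 - axis j 1)" by auto
  obtain c s where c: "r - p = c *\<^sub>R (axis i 1 + s *\<^sub>R axis j 1)" and s: "s = 1 \<or> s = -1"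
  proof -
    assume h: "\<And>c s. r - p = c *\<^sub>R (axis i 1 + s *\<^sub>R axis j 1) \<Longrightarrow> s = 1 \<or> s = -1 \<Longrightarrow> thesis"
    show thesis
    proof (cases "parallel_to E (axis i 1 + axis j 1)")
      case True
      then obtain c where "r - p = c *\<^sub>R (axis i 1 + axis j 1)" using E unfolding parallel_to_def by blast
      then show thesis using h[of c 1] by simp
    next
      case False
      then have "parallel_to E (axis i 1 - axis j 1)" using orr by blast
      then obtain c where "r - p = c *\<^sub>R (axis i 1 - axis j 1)" using E unfolding parallel_to_def by blast
      then show thesis using h[of c "-1"] by simp
    qed
  qed
  have "\<And>k. r$k \<noteq> p$k \<longleftrightarrow> (k = i \<or> k = j)"
  proof -
    fix k
    have "r$k - p$k = (c *\<^sub>R (axis i 1 + s *\<^sub>R axis j 1))$k" using c by (metis vector_minus_component)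
    then have "r$k - p$k = (if k = i then c else if k = j then c * s else 0)" using ij
      by (auto simp: axis_def)
    moreover have "c \<noteq> 0" using c rp by auto
    ultimately show "r$k \<noteq> p$k \<longleftrightarrow> (k = i \<or> k = j)" using s by (auto split: if_splits)
  qed
  then show ?thesis using flip_char[OF cp cr] by blast
qed

lemma local_global:
  fixes V :: "(real^'n::finite) set"
  assumes fin: "finite V" and cub: "\<forall>p\<in>V. cube p" and ec: "EC (convex hull V)"
    and pV: "p \<in> V" and qV: "q \<in> V" and wq: "w \<bullet> q > w \<bullet> p"
  shows "\<exists>r\<in>V. w \<bullet> r > w \<bullet> p \<and> (\<exists>i j. r = flip i j p)"
proof -
  define P where "P = convex hull V"
  have polyP: "polytope P" unfolding P_def using fin polytope_convex_hull by blast
  have convP: "convex P" unfolding P_def by simp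
  have compP: "compact P" unfolding P_def using fin finite_imp_compact compact_convex_hull by blast
  have extp: "p extreme_point_of P" unfolding P_def using cube_extreme fin cub pV by blast
  have "{p} face_of P" using extp face_of_singleton by blast
  then have "{p} exposed_face_of P"
    using exposed_face_of_polyhedron polytope_imp_polyhedron polyP by blast
  then obtain a b where ab: "P \<subseteq> {x. a \<bullet> x \<le> b}" "{p} = P \<inter> {x. a \<bullet> x = b}"
    unfolding exposed_face_of_def by blast
  have VP: "V \<subseteq> P" unfolding P_def by (rule hull_subset)
  have ap: "a \<bullet> p = b" using ab(2) by blast
  have ar: "a \<bullet> r < b" if "r \<in> V" "r \<noteq> p" for r
  proof -
    have "a \<bullet> r \<le> b" using ab(1) VP that by blast
    moreover have "a \<bullet> r \<noteq> b" using ab(2) VP that by blast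
    ultimately show ?thesis by simp
  qed
  define I where "I = {r\<in>V. w \<bullet> r > w \<bullet> p}"
  define f where "f r = (b - a \<bullet> r) / (w \<bullet> r - w \<bullet> p)" for r
  have finI: "finite I" and neI: "I \<noteq> {}" using fin qV wq unfolding I_def by auto
  define t where "t = Min (f ` I)"
  have "t \<in> f ` I" unfolding t_def using Min_in finI neI by blast
  then obtain r0 where r0: "r0 \<in> I" "f r0 = t" by blast
  have tle: "t \<le> f r" if "r \<in> I" for r using Min_le finI that unfolding t_def by auto
  have r0p: "r0 \<noteq> p" using r0(1) unfolding I_def by auto
  have tpos: "t > 0" using r0 ar[of r0] r0p unfolding I_def f_def by auto
  define u where "u = a + t *\<^sub>R w"
  define c where "c = u \<bullet> p"
  have ule: "u \<bullet> r \<le> c" and ueq: "u \<bullet> r = c \<Longrightarrow> r = p \<or> r \<in> I" if "r \<in> V" for r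
  proof -
    have "u \<bullet> r \<le> c \<and> (u \<bullet> r = c \<longrightarrow> r = p \<or> r \<in> I)"
    proof (cases "r = p")
      case True then show ?thesis unfolding c_def by simp
    next
      case False
      show ?thesis
      proof (cases "r \<in> I")
        case True
        then have d: "w \<bullet> r - w \<bullet> p > 0" unfolding I_def by auto
        have "t \<le> (b - a \<bullet> r) / (w \<bullet> r - w \<bullet> p)" using tle[OF True] unfolding f_def .
        then have "t * (w \<bullet> r - w \<bullet> p) \<le> b - a \<bullet> r" using d by (simp add: pos_le_divide_eq)
        then show ?thesis using True ap unfolding u_def c_def by (simp add: inner_add_left algebra_simps)
      next
        case nI: False
        then have "w \<bullet> r \<le> w \<bullet> p" using that unfolding I_def by auto
        then have "t * (w \<bullet> r) \<le> t * (w \<bullet> p)" using tpos by (simp add: mult_left_mono)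
        moreover have "a \<bullet> r < b" using ar that False by blast
        ultimately show ?thesis using ap unfolding u_def c_def by (simp add: inner_add_left)
      qed
    qed
    then show "u \<bullet> r \<le> c" "u \<bullet> r = c \<Longrightarrow> r = p \<or> r \<in> I" by auto
  qed
  have Psub: "P \<subseteq> {x. u \<bullet> x \<le> c}"
    unfolding P_def by (rule hull_minimal) (use ule in \<open>auto simp: convex_halfspace_le\<close>)
  define G where "G = P \<inter> {x. u \<bullet> x = c}"
  have Gf: "G face_of P" unfolding G_def
    by (rule face_of_Int_supporting_hyperplane_le) (use convP Psub in auto)
  have r0G: "r0 \<in> G"
  proof -
    have d: "w \<bullet> r0 - w \<bullet> p > 0" using r0(1) unfolding I_def by auto
    have "t * (w \<bullet> r0 - w \<bullet> p) = b - a \<bullet> r0" using r0(2) d unfolding f_def by auto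
    then have "u \<bullet> r0 = c" using ap unfolding u_def c_def by (simp add: inner_add_left algebra_simps)
    then show ?thesis unfolding G_def using VP r0(1) unfolding I_def by auto
  qed
  have pG: "p \<in> G" unfolding G_def c_def using VP pV by auto
  have "aff_dim {p, r0} \<le> aff_dim G" using pG r0G by (intro aff_dim_subset) auto
  then have adG: "aff_dim G \<ge> 1" using r0p by simp
  have polyG: "polytope G" using face_of_polytope_polytope polyP Gf by blast
  have extG: "p extreme_point_of G" using extreme_point_of_face Gf extp pG by blast
  obtain E where Ef: "E face_of G" and adE: "aff_dim E = 1" and pE: "p \<in> E"
    using edge_at_vertex[OF polyG extG adG] by blast
  have EfP: "E face_of P" using Ef Gf face_of_trans by blast
  have compE: "compact E" using face_of_imp_compact convP compP EfP by blast
  have convE: "convex E" using face_of_imp_convex EfP by blast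
  have KM: "E = convex hull {x. x extreme_point_of E}" using Krein_Milman_Minkowski compE convE by blast
  obtain r where rE: "r extreme_point_of E" and rp: "r \<noteq> p"
  proof -
    assume h: "\<And>r. r extreme_point_of E \<Longrightarrow> r \<noteq> p \<Longrightarrow> thesis"
    show thesis
    proof (rule ccontr)
      assume "\<not> thesis"
      then have "{x. x extreme_point_of E} \<subseteq> {p}" using h by blast
      then have "E \<subseteq> convex hull {p}" using KM hull_mono by metis
      then have "aff_dim E \<le> aff_dim {p}" by (intro aff_dim_subset) simp
      then show False using adE by simp
    qed
  qed
  have rP: "r extreme_point_of P" using extreme_point_of_face EfP rE by blast
  have rV: "r \<in> V" using rP extreme_point_of_convex_hull unfolding P_def by blast
  have rinE: "r \<in> E" using rE extreme_point_of_def by blast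
  have "r \<in> G" using rinE Ef face_of_imp_subset by blast
  then have "u \<bullet> r = c" unfolding G_def by blast
  then have rI: "r \<in> I" using ueq rV rp by blast
  have "is_poly_edge E P" unfolding is_poly_edge_def using EfP adE by blast
  then have par: "(\<exists>i. parallel_to E (axis i 1)) \<or>
        (\<exists>i j. i \<noteq> j \<and> (parallel_to E (axis i 1 + axis j 1)
                           \<or> parallel_to E (axis i 1 - axis j 1)))"
    using ec unfolding EC_def P_def by blast
  have "\<exists>i j. r = flip i j p"
    using parallel_flip[OF _ _ rp pE rinE par] cub pV rV by blast
  then show ?thesis using rI rV unfolding I_def by blast
qed

lemma flip_nth: "flip i j p $ k = (if k = i \<or> k = j then - p$k else p$k)"
  by (simp add: flip_def)

lemma flip_inner:
  fixes p w :: "real^'n::finite"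
  shows "w \<bullet> flip i j p = w \<bullet> p - 2 * (w$i * p$i) - (if j = i then 0 else 2 * (w$j * p$j))"
proof -
  have "w \<bullet> flip i j p - w \<bullet> p = (\<Sum>k\<in>UNIV. w$k * (flip i j p $ k - p$k))"
    by (simp add: inner_vec_def sum_subtractf algebra_simps)
  also have "\<dots> = (\<Sum>k\<in>{i,j}. w$k * (flip i j p $ k - p$k))"
    by (rule sum.mono_neutral_right) (auto simp: flip_nth)
  also have "\<dots> = - 2 * (w$i * p$i) - (if j = i then 0 else 2 * (w$j * p$j))"
    by (cases "j = i") (auto simp: flip_nth)
  finally show ?thesis by simp
qed

lemma cube_diff_inner:
  fixes p q u :: "real^'n::finite"
  assumes "cube p" "cube q"
  shows "u \<bullet> q - u \<bullet> p = (\<Sum>k\<in>{k. p$k \<noteq> q$k}. - 2 * (u$k * p$k))"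
proof -
  have "u \<bullet> q - u \<bullet> p = (\<Sum>k\<in>UNIV. u$k * (q$k - p$k))"
    by (simp add: inner_vec_def sum_subtractf algebra_simps)
  also have "\<dots> = (\<Sum>k\<in>{k. p$k \<noteq> q$k}. u$k * (q$k - p$k))"
    by (rule sum.mono_neutral_right) auto
  also have "\<dots> = (\<Sum>k\<in>{k. p$k \<noteq> q$k}. - 2 * (u$k * p$k))"
  proof (rule sum.cong)
    fix k assume "k \<in> {k. p$k \<noteq> q$k}"
    then have "q$k \<noteq> p$k" by simp
    then have "q$k = - p$k" using assms(1,2) by (rule cube_neq[rotated 2])
    then show "u$k * (q$k - p$k) = - 2 * (u$k * p$k)" by simp
  qed simp
  finally show ?thesis .
qed

lemma line_parallel:
  assumes "\<forall>x\<in>E. \<exists>t. x = p + t *\<^sub>R (q - p)" "q - p = c0 *\<^sub>R d"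
  shows "parallel_to E d"
  unfolding parallel_to_def
proof (intro ballI)
  fix x y assume "x \<in> E" "y \<in> E"
  then obtain tx ty where "x = p + tx *\<^sub>R (q - p)" "y = p + ty *\<^sub>R (q - p)" using assms(1) by blast
  then have "x - y = ((tx - ty) * c0) *\<^sub>R d" using assms(2) by (simp add: algebra_simps)
  then show "\<exists>c. x - y = c *\<^sub>R d" by blast
qed

definition VEXCH :: "(real^'n::finite) set \<Rightarrow> bool" where
  "VEXCH V \<longleftrightarrow> (\<forall>p\<in>V. \<forall>q\<in>V. \<forall>i. p$i \<noteq> q$i \<longrightarrow> (\<exists>j. p$j \<noteq> q$j \<and> flip i j p \<in> V))"

lemma exch_EC:
  fixes V :: "(real^'n::finite) set"
  assumes fin: "finite V" and cub: "\<forall>p\<in>V. cube p" and ex: "VEXCH V"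
  shows "EC (convex hull V)"
  unfolding EC_def
proof (intro allI impI)
  fix E assume "is_poly_edge E (convex hull V)"
  define P where "P = convex hull V"
  have Ef: "E face_of P" and adE: "aff_dim E = 1" using \<open>is_poly_edge E _\<close> unfolding is_poly_edge_def P_def by auto
  have polyP: "polytope P" unfolding P_def using fin polytope_convex_hull by blast
  have convP: "convex P" unfolding P_def by simp
  have compP: "compact P" unfolding P_def using fin finite_imp_compact compact_convex_hull by blast
  have VP: "V \<subseteq> P" unfolding P_def by (rule hull_subset)
  have "E exposed_face_of P"
    using exposed_face_of_polyhedron polytope_imp_polyhedron polyP Ef by blast
  then obtain u b where ub: "P \<subseteq> {x. u \<bullet> x \<le> b}" "E = P \<inter> {x. u \<bullet> x = b}"
    unfolding exposed_face_of_def by blast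
  have compE: "compact E" using face_of_imp_compact convP compP Ef by blast
  have convE: "convex E" using face_of_imp_convex Ef by blast
  have KM: "E = convex hull {x. x extreme_point_of E}" using Krein_Milman_Minkowski compE convE by blast
  have twoext: "\<exists>q. q extreme_point_of E \<and> q \<noteq> p" for p
  proof (rule ccontr)
    assume "\<not> ?thesis"
    then have "{x. x extreme_point_of E} \<subseteq> {p}" by blast
    then have "E \<subseteq> convex hull {p}" using KM hull_mono by metis
    then have "aff_dim E \<le> aff_dim {p}" by (intro aff_dim_subset) simp
    then show False using adE by simp
  qed
  obtain p where pE: "p extreme_point_of E" using twoext by blast
  obtain q where qE: "q extreme_point_of E" and qp: "q \<noteq> p" using twoext by blast
  have pV: "p \<in> V" and qV: "q \<in> V"
  proof -
    have "p extreme_point_of P" "q extreme_point_of P" using extreme_point_of_face[OF Ef] pE qE by blast+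
    then show "p \<in> V" "q \<in> V" using extreme_point_of_convex_hull unfolding P_def by blast+
  qed
  have pinE: "p \<in> E" using pE unfolding extreme_point_of_def by blast
  have qinE: "q \<in> E" using qE unfolding extreme_point_of_def by blast
  have cp: "cube p" and cq: "cube q" using cub pV qV by auto
  have "collinear E" using adE by (simp add: collinear_aff_dim)
  then obtain u0 where u0: "\<forall>x\<in>E. \<forall>y\<in>E. \<exists>c. x - y = c *\<^sub>R u0" unfolding collinear_def by blast
  obtain c0 where c0: "q - p = c0 *\<^sub>R u0" using u0 pinE qinE by blast
  have c0nz: "c0 \<noteq> 0" using c0 qp by auto
  have line: "\<forall>x\<in>E. \<exists>t. x = p + t *\<^sub>R (q - p)"
  proof
    fix x assume "x \<in> E"
    then obtain c1 where "x - p = c1 *\<^sub>R u0" using u0 pinE by blast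
    have "(c1 / c0) *\<^sub>R (q - p) = c1 *\<^sub>R u0" using c0 c0nz by simp
    then have "x = p + (c1 / c0) *\<^sub>R (q - p)" using \<open>x - p = c1 *\<^sub>R u0\<close> by (metis add.commute diff_add_cancel)
    then show "\<exists>t. x = p + t *\<^sub>R (q - p)" by blast
  qed
  define D where "D = {k. p$k \<noteq> q$k}"
  have finD: "finite D" by simp
  have Dne: "D \<noteq> {}" using qp unfolding D_def by (auto simp: vec_eq_iff) (metis)
  have qk: "q$k = - p$k" if "k \<in> D" for k
  proof -
    have "q$k \<noteq> p$k" using that unfolding D_def by auto
    then show ?thesis using cube_neq[OF cp cq] by blast
  qed
  have upq: "u \<bullet> p = b" "u \<bullet> q = b" using ub pinE qinE by auto
  have Dle2: "card D \<le> 2"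
  proof (rule ccontr)
    assume "\<not> card D \<le> 2"
    then have D3: "card D \<ge> 3" by simp
    have strict: "u \<bullet> flip i j x < b"
      if xy: "(x = p \<and> y = q) \<or> (x = q \<and> y = p)" and ij: "i \<in> D" "j \<in> D" and fV: "flip i j x \<in> V"
      for x y i j
    proof -
      have "u \<bullet> flip i j x \<le> b" using ub VP fV by blast
      moreover have "u \<bullet> flip i j x \<noteq> b"
      proof
        assume "u \<bullet> flip i j x = b"
        then have "flip i j x \<in> E" using ub VP fV by blast
        then obtain t where t: "flip i j x = p + t *\<^sub>R (q - p)" using line by blast
        have fi: "flip i j x $ i = p$i + t * (q$i - p$i)" unfolding t by simp
        have pi: "p$i = 1 \<or> p$i = -1" using cp unfolding cube_def by blast
        obtain k where k: "k \<in> D" "k \<noteq> i" "k \<noteq> j"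
        proof (rule ccontr)
          assume "\<not> thesis"
          then have "D \<subseteq> {i, j}" using that by blast
          then have "card D \<le> card {i, j}" by (intro card_mono) auto
          also have "\<dots> \<le> 2" by (simp add: card_insert_if)
          finally show False using D3 by simp
        qed
        have fk: "flip i j x $ k = p$k + t * (q$k - p$k)" unfolding t by simp
        have pk: "p$k = 1 \<or> p$k = -1" using cp unfolding cube_def by blast
        show False
        proof (cases "x = p")
          case True
          then have "flip i j x $ i = - p$i" by (simp add: flip_nth)
          then have "- p$i = p$i + t * (- 2 * p$i)" using fi qk[OF ij(1)] by simp
          then have "t = 1" using pi by auto
          moreover have "flip i j x $ k = p$k" using True k by (simp add: flip_nth)
          ultimately show False using fk qk[OF k(1)] pk by auto
        next
          case False
          then have xq: "x = q" using xy by blast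
          then have "flip i j x $ i = p$i" using qk[OF ij(1)] by (simp add: flip_nth)
          then have "p$i = p$i + t * (- 2 * p$i)" using fi qk[OF ij(1)] by simp
          then have "t = 0" using pi by auto
          moreover have "flip i j x $ k = - p$k" using xq k qk[OF k(1)] by (simp add: flip_nth)
          ultimately show False using fk pk by auto
        qed
      qed
      ultimately show ?thesis by simp
    qed
    define \<alpha> where "\<alpha> k = - 2 * (u$k * p$k)" for k
    have sum0: "(\<Sum>k\<in>D. \<alpha> k) = 0" using cube_diff_inner[OF cp cq, of u] upq unfolding D_def \<alpha>_def by simp
    have "Max (\<alpha> ` D) \<in> \<alpha> ` D" using finD Dne by (intro Max_in) auto
    then obtain i where iD: "i \<in> D" and iM: "\<alpha> i = Max (\<alpha> ` D)" by force
    have imax: "\<forall>k\<in>D. \<alpha> k \<le> \<alpha> i" using iM finD by simp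
    have "Min (\<alpha> ` D) \<in> \<alpha> ` D" using finD Dne by (intro Min_in) auto
    then obtain i' where i'D: "i' \<in> D" and iM': "\<alpha> i' = Min (\<alpha> ` D)" by force
    have imin: "\<forall>k\<in>D. \<alpha> i' \<le> \<alpha> k" using iM' finD by simp
    have Mge: "\<alpha> i \<ge> 0"
    proof (rule ccontr)
      assume "\<not> \<alpha> i \<ge> 0"
      then have "(\<Sum>k\<in>D. \<alpha> k) < (\<Sum>k\<in>D. 0)" using imax finD Dne
        by (intro sum_strict_mono) force+
      then show False using sum0 by simp
    qed
    have mle: "\<alpha> i' \<le> 0"
    proof (rule ccontr)
      assume "\<not> \<alpha> i' \<le> 0"
      then have "(\<Sum>k\<in>D. 0) < (\<Sum>k\<in>D. \<alpha> k)" using imin finD Dne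
        by (intro sum_strict_mono) force+
      then show False using sum0 by simp
    qed
    obtain j where jD: "j \<in> D" and fj: "flip i j p \<in> V"
      using ex pV qV iD unfolding VEXCH_def D_def by blast
    have "u \<bullet> flip i j p < b" using strict[of p q i j] iD jD fj by blast
    then have A: "\<alpha> i + (if j = i then 0 else \<alpha> j) < 0"
      using upq unfolding flip_inner \<alpha>_def by (cases "j = i") (auto simp: algebra_simps)
    have "q$i' \<noteq> p$i' \<longrightarrow> (\<exists>j. q$j \<noteq> p$j \<and> flip i' j q \<in> V)"
      using ex pV qV unfolding VEXCH_def by blast
    moreover have "q$i' \<noteq> p$i'" using i'D unfolding D_def by auto
    ultimately obtain j' where j'1: "q$j' \<noteq> p$j'" and fj': "flip i' j' q \<in> V" by blast
    have j'D: "j' \<in> D" using j'1 unfolding D_def by auto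
    have "u \<bullet> flip i' j' q < b" using strict[of q p i' j'] i'D j'D fj' by blast
    then have B: "- \<alpha> i' - (if j' = i' then 0 else \<alpha> j') < 0"
      using upq qk[OF i'D] qk[OF j'D] unfolding flip_inner \<alpha>_def by (cases "j' = i'") (auto simp: algebra_simps)
    have "\<alpha> j \<ge> \<alpha> i'" "\<alpha> j' \<le> \<alpha> i" using imin imax jD j'D by auto
    then show False using A B Mge mle by (auto split: if_splits)
  qed
  show "(\<exists>i. parallel_to E (axis i 1)) \<or>
        (\<exists>i j. i \<noteq> j \<and> (parallel_to E (axis i 1 + axis j 1) \<or> parallel_to E (axis i 1 - axis j 1)))"
  proof (cases "card D = 1")
    case True
    then obtain i where Di: "D = {i}" by (auto simp: card_Suc_eq)
    have "q - p = (- 2 * p$i) *\<^sub>R axis i 1"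
    proof (subst vec_eq_iff, intro allI)
      fix k show "(q - p) $ k = ((- 2 * p$i) *\<^sub>R axis i 1) $ k"
      proof (cases "k = i")
        case True then show ?thesis using qk[of i] Di by (simp add: axis_def)
      next
        case False then have "k \<notin> D" using Di by blast
        then show ?thesis using False unfolding D_def by (simp add: axis_def)
      qed
    qed
    then show ?thesis using line_parallel[OF line] by blast
  next
    case False
    have "card D \<noteq> 0" using Dne by simp
    then have "card D = 2" using Dle2 False by linarith
    then obtain i j where Dij: "D = {i, j}" and ij: "i \<noteq> j" by (auto simp: card_Suc_eq numeral_2_eq_2)
    define s where "s = p$i * p$j"
    have pi: "p$i = 1 \<or> p$i = -1" using cp unfolding cube_def by blast
    have pj: "p$j = 1 \<or> p$j = -1" using cp unfolding cube_def by blast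
    have "q - p = (- 2 * p$i) *\<^sub>R (axis i 1 + s *\<^sub>R axis j 1)"
    proof (subst vec_eq_iff, intro allI)
      fix k show "(q - p) $ k = ((- 2 * p$i) *\<^sub>R (axis i 1 + s *\<^sub>R axis j 1)) $ k"
      proof (cases "k = i \<or> k = j")
        case True then show ?thesis using qk[of i] qk[of j] Dij ij pi pj unfolding s_def
          by (auto simp: axis_def)
      next
        case False then have "k \<notin> D" using Dij by blast
        then show ?thesis using False unfolding D_def by (auto simp: axis_def)
      qed
    qed
    moreover have "s = 1 \<or> s = -1" using pi pj unfolding s_def by auto
    ultimately have "parallel_to E (axis i 1 + axis j 1) \<or> parallel_to E (axis i 1 - axis j 1)"
    proof (elim disjE)
      assume "q - p = (- 2 * p$i) *\<^sub>R (axis i 1 + s *\<^sub>R axis j 1)" "s = 1"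
      then have "q - p = (- 2 * p$i) *\<^sub>R (axis i 1 + axis j 1)" by simp
      then show ?thesis using line_parallel[OF line] by blast
    next
      assume "q - p = (- 2 * p$i) *\<^sub>R (axis i 1 + s *\<^sub>R axis j 1)" "s = -1"
      then have "q - p = (- 2 * p$i) *\<^sub>R (axis i 1 - axis j 1)" by simp
      then show ?thesis using line_parallel[OF line] by blast
    qed
    then show ?thesis using ij by blast
  qed
qed

lemma adm_iff: "admissible S \<longleftrightarrow> (\<forall>k. \<not> ((k,True) \<in> S \<and> (k,False) \<in> S))"
  unfolding admissible_def bar_def by (auto) (metis (full_types))

lemma adm_sub: "admissible X \<Longrightarrow> S \<subseteq> X \<Longrightarrow> admissible S"
  unfolding admissible_def by blast

lemma adm_insert: "admissible S \<Longrightarrow> bar a \<notin> S \<Longrightarrow> admissible (insert a S)"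
  unfolding admissible_def by (auto simp: bar_inj)

definition tv :: "('n \<Rightarrow> bool) \<Rightarrow> ('n \<times> bool) set" where
  "tv s = range (\<lambda>k. (k, s k))"

lemma mem_tv[simp]: "(k, b) \<in> tv s \<longleftrightarrow> b = s k"
  unfolding tv_def by auto

lemma tv_adm: "admissible (tv s)"
  unfolding adm_iff by simp

lemma tv_card: "card (tv (s::'n::finite \<Rightarrow> bool)) = CARD('n)"
  unfolding tv_def by (subst card_image) (auto simp: inj_on_def)

lemma inj_fst_adm: "admissible B \<Longrightarrow> inj_on fst B"
  unfolding inj_on_def adm_iff by (metis (full_types) prod.collapse)

lemma card_adm_le: "admissible (B::('n::finite \<times> bool) set) \<Longrightarrow> card B \<le> CARD('n)"
  using card_image[OF inj_fst_adm] card_mono[of UNIV "fst ` B"] by fastforce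

lemma transversal_tv:
  fixes B :: "('n::finite \<times> bool) set"
  assumes "admissible B" "card B = CARD('n)"
  shows "B = tv (\<lambda>k. (k,True) \<in> B)"
proof -
  have "card (fst ` B) = CARD('n)" using card_image[OF inj_fst_adm[OF assms(1)]] assms(2) by simp
  then have "fst ` B = UNIV" by (simp add: card_eq_UNIV_imp_eq_UNIV)
  have cov: "\<forall>k. (k,True) \<in> B \<or> (k,False) \<in> B"
  proof
    fix k
    have "k \<in> fst ` B" using \<open>fst ` B = UNIV\<close> by simp
    then obtain x where x: "x \<in> B" "fst x = k" by auto
    then have "(k, snd x) \<in> B" by (metis prod.collapse)
    then show "(k,True) \<in> B \<or> (k,False) \<in> B" by (cases "snd x") auto
  qed
  show ?thesis
  proof (rule set_eqI)
    fix x :: "'n \<times> bool"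
    obtain k b where x: "x = (k,b)" by (cases x)
    show "x \<in> B \<longleftrightarrow> x \<in> tv (\<lambda>k. (k,True) \<in> B)"
      using cov assms(1) unfolding x adm_iff by (cases b) auto
  qed
qed

lemma not_transversal_gap:
  fixes B :: "('n::finite \<times> bool) set"
  assumes "admissible B" "card B \<noteq> CARD('n)"
  shows "\<exists>k. (k,True) \<notin> B \<and> (k,False) \<notin> B"
proof (rule ccontr)
  assume "\<not> ?thesis"
  then have "fst ` B = UNIV" by (auto simp: image_iff) (metis (full_types) fst_conv)
  then have "card B = CARD('n)" using card_image[OF inj_fst_adm[OF assms(1)]] by simp
  then show False using assms(2) by simp
qed

lemma eset_tv: "eset (tv s) $ k = (if s k then 1 else -1)"
  by (simp add: eset_nth)

lemma flip_tv: "flip i j (eset (tv s)) = eset (tv (s(i := \<not> s i, j := \<not> s j)))"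
  by (simp add: vec_eq_iff flip_nth eset_tv)

lemma mem_bar_image: "x \<in> bar ` A \<longleftrightarrow> bar x \<in> A"
  by (auto simp: image_iff) (metis bar_bar)

lemma barset_inter_tv:
  fixes S :: "('n::finite \<times> bool) set"
  shows "card (barset S \<inter> tv s) = card S - card (S \<inter> tv s)"
proof -
  have "barset S \<inter> tv s = bar ` (S - tv s)"
  proof (rule set_eqI)
    fix x :: "'n \<times> bool"
    obtain k b where x: "x = (k,b)" by (cases x)
    show "x \<in> barset S \<inter> tv s \<longleftrightarrow> x \<in> bar ` (S - tv s)"
      unfolding x by (cases b) (auto simp: mem_barset mem_bar_image)
  qed
  then have "card (barset S \<inter> tv s) = card (S - tv s)"
    by (simp add: card_image inj_on_def bar_inj)
  also have "\<dots> = card S - card (S \<inter> tv s)" by (simp add: card_Diff_subset_Int Int_commute)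
  finally show ?thesis .
qed

locale hfun =
  fixes h :: "('n::finite \<times> bool) set \<Rightarrow> int"
  assumes H1: "h {} = 0"
  and H2: "\<forall>S. admissible S \<and> card S = 1 \<longrightarrow> h S \<in> {0, 1}"
  and H3: "\<forall>S T. admissible S \<longrightarrow> admissible T \<longrightarrow>
              real_of_int (h S) + real_of_int (h T)
                \<ge> real_of_int (h (S \<inter> T)) + real_of_int (h (sqcup S T))
                   + real (card (S \<inter> barset T)) / 2"
begin

lemma sub:
  assumes "admissible (S \<union> T)"
  shows "h (S \<inter> T) + h (S \<union> T) \<le> h S + h T"
proof -
  have aS: "admissible S" and aT: "admissible T" using assms adm_sub by blast+
  have e: "S \<inter> barset T = {}"
  proof -
    { fix x assume "x \<in> S" "x \<in> barset T"
      then have "bar x \<in> T" by (simp add: mem_barset)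
      with \<open>x \<in> S\<close> assms have False unfolding admissible_def by blast }
    then show ?thesis by blast
  qed
  have u: "sqcup S T = S \<union> T" using assms unfolding admissible_def sqcup_def by auto
  show ?thesis using H3 aS aT e u by (metis (no_types, lifting) card.empty div_0 add_0_right of_int_add of_int_le_iff of_nat_0)
qed

lemma R3:
  assumes aS: "admissible S" and a: "a \<notin> S" "bar a \<notin> S"
  shows "2 * h S + 1 \<le> h (insert a S) + h (insert (bar a) S)"
proof -
  have aX: "admissible (insert a S)" using adm_insert aS a by blast
  have aY: "admissible (insert (bar a) S)" using adm_insert[of S "bar a"] aS a by simp
  have i: "insert a S \<inter> insert (bar a) S = S" using a by auto
  have u: "sqcup (insert a S) (insert (bar a) S) = S"
    using aS a unfolding sqcup_def admissible_def by (auto simp: bar_inj)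
  have c: "insert a S \<inter> barset (insert (bar a) S) = {a}"
  proof -
    { fix x assume x: "x \<in> S" "bar x \<in> insert (bar a) S"
      have "bar x \<noteq> bar a" using x a by (auto simp: bar_inj)
      then have "bar x \<in> S" using x by blast
      then have False using x aS unfolding admissible_def by blast }
    note hyp = this
    show ?thesis
    proof (rule set_eqI)
      fix x
      show "x \<in> insert a S \<inter> barset (insert (bar a) S) \<longleftrightarrow> x \<in> {a}"
      proof
        assume "x \<in> insert a S \<inter> barset (insert (bar a) S)"
        then have "x \<in> insert a S" "bar x \<in> insert (bar a) S" unfolding mem_barset[symmetric] by blast+
        then show "x \<in> {a}" using hyp by blast
      next
        assume "x \<in> {a}"
        then show "x \<in> insert a S \<inter> barset (insert (bar a) S)" by (simp add: mem_barset)
      qed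
    qed
  qed
  have "real_of_int (h (insert a S)) + real_of_int (h (insert (bar a) S)) \<ge> 2 * real_of_int (h S) + 1 / 2"
  proof -
    have "real_of_int (h (insert a S)) + real_of_int (h (insert (bar a) S))
      \<ge> real_of_int (h (insert a S \<inter> insert (bar a) S)) + real_of_int (h (sqcup (insert a S) (insert (bar a) S)))
         + real (card (insert a S \<inter> barset (insert (bar a) S))) / 2"
      using H3 aX aY by blast
    then show ?thesis unfolding i u c by simp
  qed
  then show ?thesis by linarith
qed

lemma inc:
  assumes aS: "admissible S" and a: "a \<notin> S" "bar a \<notin> S"
  shows "h (insert a S) \<le> h S + 1"
proof -
  have "admissible (S \<union> {a})" using adm_insert aS a by simp
  then have "h (S \<inter> {a}) + h (S \<union> {a}) \<le> h S + h {a}" by (rule sub)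
  moreover have "S \<inter> {a} = {}" using a by auto
  moreover have "h {a} \<le> 1"
  proof -
    have "admissible {a}" unfolding admissible_def by simp
    then show ?thesis using H2 by force
  qed
  ultimately show ?thesis using H1 by simp
qed

lemma mono1:
  assumes aS: "admissible S" and a: "a \<notin> S" "bar a \<notin> S"
  shows "h S \<le> h (insert a S)"
  using R3[OF assms] inc[of S "bar a"] aS a by simp

lemma le_card: assumes "admissible S" shows "h S \<le> int (card S)"
  using finite[of S] assms
proof (induction S rule: finite_induct)
  case empty then show ?case using H1 by simp
next
  case (insert x F)
  have aF: "admissible F" using insert.prems adm_sub by blast
  have "bar x \<notin> F" using insert.prems unfolding admissible_def by auto
  then have "h (insert x F) \<le> h F + 1" using inc aF insert.hyps by blast
  then show ?case using insert aF by simp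
qed

lemma grow:
  assumes "finite Z" "admissible (S \<union> Z)" "S \<inter> Z = {}"
  shows "h S \<le> h (S \<union> Z) \<and> h (S \<union> Z) \<le> h S + int (card Z)"
  using assms
proof (induction Z rule: finite_induct)
  case empty then show ?case by simp
next
  case (insert x F)
  have aF: "admissible (S \<union> F)" using insert.prems adm_sub by blast
  have xn: "x \<notin> S \<union> F" using insert by auto
  have bx: "bar x \<notin> S \<union> F" using insert.prems unfolding admissible_def by auto
  have IH: "h S \<le> h (S \<union> F) \<and> h (S \<union> F) \<le> h S + int (card F)" using insert aF by auto
  have "h (S \<union> F) \<le> h (insert x (S \<union> F))" "h (insert x (S \<union> F)) \<le> h (S \<union> F) + 1"
    using mono1[OF aF xn bx] inc[OF aF xn bx] by auto
  then show ?case using IH insert.hyps by simp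
qed

lemma mono: assumes "admissible X" "S \<subseteq> X" shows "h S \<le> h X"
proof -
  have e: "S \<union> (X - S) = X" using assms by blast
  show ?thesis using grow[of "X - S" S] assms unfolding e by simp
qed

lemma hered:
  assumes "admissible X" "h X = int (card X)" "S \<subseteq> X"
  shows "h S = int (card S)"
proof -
  have e: "S \<union> (X - S) = X" using assms by blast
  have "h X \<le> h S + int (card (X - S))" using grow[of "X - S" S] assms unfolding e by simp
  moreover have "card (X - S) = card X - card S" using assms(3) by (simp add: card_Diff_subset)
  moreover have "card S \<le> card X" using assms(3) by (simp add: card_mono)
  moreover have "h S \<le> int (card S)" using le_card adm_sub assms by blast
  ultimately show ?thesis using assms(2) by simp
qed


lemma augment:
  assumes aX: "admissible X" and IX: "I \<subseteq> X" and hI: "h I = int (card I)"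
  shows "\<exists>J. I \<subseteq> J \<and> J \<subseteq> X \<and> h J = int (card J) \<and> h J = h X"
proof -
  have gen: "Z \<subseteq> X - I \<Longrightarrow> \<exists>J. I \<subseteq> J \<and> J \<subseteq> I \<union> Z \<and> h J = int (card J) \<and> h J = h (I \<union> Z)" for Z
    using finite[of Z]
  proof (induction Z rule: finite_induct)
    case empty then show ?case using hI by auto
  next
    case (insert a Z)
    define Y where "Y = I \<union> Z"
    obtain J where J: "I \<subseteq> J" "J \<subseteq> Y" "h J = int (card J)" "h J = h Y"
      using insert unfolding Y_def by auto
    have "insert a Y \<subseteq> X" using insert.prems IX unfolding Y_def by auto
    then have aY: "admissible (insert a Y)" using adm_sub[OF aX] by blast
    have aY': "admissible Y" using adm_sub[OF aY] by blast
    have anY: "a \<notin> Y" using insert unfolding Y_def by auto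
    have baY: "bar a \<notin> Y" using aY unfolding admissible_def by auto
    have e: "I \<union> insert a Z = insert a Y" unfolding Y_def by auto
    have m1: "h Y \<le> h (insert a Y)" "h (insert a Y) \<le> h Y + 1"
      using mono1[OF aY' anY baY] inc[OF aY' anY baY] by auto
    show ?case
    proof (cases "h (insert a Y) = h Y")
      case True
      then show ?thesis using J unfolding e by auto
    next
      case False
      then have hi: "h (insert a Y) = h Y + 1" using m1 by simp
      have u1: "insert a J \<union> Y = insert a Y" using J by auto
      have i1: "insert a J \<inter> Y = J" using J anY by auto
      have "h (insert a J \<inter> Y) + h (insert a J \<union> Y) \<le> h (insert a J) + h Y"
        using sub[of "insert a J" Y] aY unfolding u1 by blast
      then have g: "h (insert a J) \<ge> int (card J) + 1" unfolding u1 i1 using hi J by simp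
      have anJ: "a \<notin> J" using J anY by auto
      have "admissible (insert a J)" using adm_sub[OF aY, of "insert a J"] J by auto
      then have "h (insert a J) \<le> int (card (insert a J))" by (rule le_card)
      then have "h (insert a J) = int (card (insert a J))" using g anJ by simp
      moreover have "h (insert a J) = h (insert a Y)" using g hi J anJ \<open>h (insert a J) \<le> _\<close> by simp
      ultimately show ?thesis using J unfolding e by (intro exI[of _ "insert a J"]) auto
    qed
  qed
  have "I \<union> (X - I) = X" using IX by blast
  then show ?thesis using gen[of "X - I"] by auto
qed

lemma extend:
  assumes "admissible I" "h I = int (card I)"
  shows "\<exists>s. I \<subseteq> tv s \<and> h (tv s) = int CARD('n)"
proof -
  have "\<And>I. CARD('n) - card I = m \<Longrightarrow> admissible I \<Longrightarrow> h I = int (card I) \<Longrightarrow>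
           \<exists>s. I \<subseteq> tv s \<and> h (tv s) = int CARD('n)" for m
  proof (induction m rule: less_induct)
    case (less m I)
    show ?case
    proof (cases "card I = CARD('n)")
      case True
      define s0 where "s0 = (\<lambda>k. (k,True) \<in> I)"
      have eq: "I = tv s0" unfolding s0_def using transversal_tv less.prems True by blast
      have "h (tv s0) = int CARD('n)" using less.prems(3) True unfolding eq[symmetric] by simp
      then show ?thesis using eq by blast
    next
      case False
      then obtain k where k: "(k,True) \<notin> I" "(k,False) \<notin> I" using not_transversal_gap less.prems by blast
      have r: "2 * h I + 1 \<le> h (insert (k,True) I) + h (insert (k,False) I)"
        using R3[OF less.prems(2), of "(k,True)"] k by simp
      have a1: "admissible (insert (k,True) I)" and a2: "admissible (insert (k,False) I)"
        using adm_insert[OF less.prems(2), of "(k,True)"] adm_insert[OF less.prems(2), of "(k,False)"] k by auto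
      have c1: "h (insert (k,True) I) \<le> int (card I) + 1" using le_card[OF a1] k by simp
      have c2: "h (insert (k,False) I) \<le> int (card I) + 1" using le_card[OF a2] k by simp
      have lt: "card I < CARD('n)" using card_adm_le[OF less.prems(2)] False by simp
      have "h (insert (k,True) I) = int (card I) + 1 \<or> h (insert (k,False) I) = int (card I) + 1"
        using r c1 c2 less.prems(3) by linarith
      then obtain b where b: "h (insert (k,b) I) = int (card I) + 1" by blast
      have ab: "admissible (insert (k,b) I)" using a1 a2 by (cases b) auto
      have kb: "(k,b) \<notin> I" using k by (cases b) auto
      have "CARD('n) - card (insert (k,b) I) < m" using lt kb less.prems(1) by simp
      moreover have "h (insert (k,b) I) = int (card (insert (k,b) I))" using b kb by simp
      ultimately obtain s where "insert (k,b) I \<subseteq> tv s" "h (tv s) = int CARD('n)"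
        using less.IH ab by blast
      then show ?thesis by blast
    qed
  qed
  then show ?thesis using assms by blast
qed


definition F0 :: "('n \<times> bool) set set" where
  "F0 = {B. admissible B \<and> card B = CARD('n) \<and> h B = int CARD('n)}"

lemma tv_F0: "tv s \<in> F0 \<longleftrightarrow> h (tv s) = int CARD('n)"
  unfolding F0_def using tv_adm tv_card by auto

lemma F0_tv: assumes "B \<in> F0" obtains s where "B = tv s" "h (tv s) = int CARD('n)"
proof -
  define s0 where "s0 = (\<lambda>k. (k,True) \<in> B)"
  have eq: "B = tv s0" unfolding s0_def using transversal_tv assms unfolding F0_def by blast
  then have "h (tv s0) = int CARD('n)" using assms unfolding F0_def by auto
  then show ?thesis using that eq by blast
qed

lemma F0_ne: "F0 \<noteq> {}"
proof -
  have "admissible ({}::('n \<times> bool) set)" unfolding admissible_def by simp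
  then obtain s where "h (tv s) = int CARD('n)" using extend[of "{}"] H1 by auto
  then show ?thesis using tv_F0 by blast
qed

lemma rank_eq:
  assumes aS: "admissible S"
  shows "rank_h F0 S = real_of_int (h S)"
proof -
  define t where "t B = int (card (S \<inter> B)) - int (card (barset S \<inter> B))" for B
  have tB: "t B = 2 * int (card (S \<inter> B)) - int (card S)" if B0: "B \<in> F0" for B
  proof -
    obtain s where s: "B = tv s" using F0_tv[OF B0] by blast
    have "card (S \<inter> B) \<le> card S" by (simp add: card_mono)
    then show ?thesis unfolding t_def s barset_inter_tv by (simp add: s)
  qed
  have ub: "int (card (S \<inter> B)) \<le> h S" if "B \<in> F0" for B
  proof -
    have "admissible B" "h B = int (card B)" using that unfolding F0_def by auto
    then have "h (S \<inter> B) = int (card (S \<inter> B))" using hered by blast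
    moreover have "h (S \<inter> B) \<le> h S" using mono[OF aS] by blast
    ultimately show ?thesis by simp
  qed
  obtain J where J: "J \<subseteq> S" "h J = int (card J)" "h J = h S"
    using augment[OF aS, of "{}"] H1 by auto
  have aJ: "admissible J" using adm_sub[OF aS J(1)] .
  obtain s where s: "J \<subseteq> tv s" "h (tv s) = int CARD('n)" using extend[OF aJ J(2)] by blast
  have sF: "tv s \<in> F0" using tv_F0 s(2) by blast
  have "card J \<le> card (S \<inter> tv s)" using J(1) s(1) by (intro card_mono) auto
  then have "int (card (S \<inter> tv s)) = h S" using ub[OF sF] J by simp
  then have tmax: "t (tv s) = 2 * h S - int (card S)" using tB[OF sF] by simp
  have "Max (t ` F0) = 2 * h S - int (card S)"
  proof (rule Max_eqI)
    show "finite (t ` F0)" by simp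
    show "y \<le> 2 * h S - int (card S)" if "y \<in> t ` F0" for y
      using that tB ub by force
    show "2 * h S - int (card S) \<in> t ` F0" using tmax sF by force
  qed
  then have "rank_g F0 S = 2 * h S - int (card S)" unfolding rank_g_def t_def by simp
  then show ?thesis unfolding rank_h_def by simp
qed

lemma EXC:
  assumes h1: "h (tv s1) = int CARD('n)" and h2: "h (tv s2) = int CARD('n)" and i: "s1 i \<noteq> s2 i"
  shows "\<exists>j. s1 j \<noteq> s2 j \<and> h (tv (s1(i := \<not> s1 i, j := \<not> s1 j))) = int CARD('n)"
proof (cases "h (tv (s1(i := \<not> s1 i))) = int CARD('n)")
  case True
  then show ?thesis using i by (intro exI[of _ i]) simp
next
  case False
  define s' where "s' = s1(i := \<not> s1 i)"
  define X where "X = tv s'"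
  have aX: "admissible X" unfolding X_def by (rule tv_adm)
  have cX: "card X = CARD('n)" unfolding X_def by (rule tv_card)
  have sub1: "tv s1 - {(i, s1 i)} \<subseteq> X"
  proof
    fix x assume x: "x \<in> tv s1 - {(i, s1 i)}"
    obtain k b where kb: "x = (k,b)" by (cases x)
    have "b = s1 k" "k \<noteq> i" using x unfolding kb by auto
    then show "x \<in> X" unfolding X_def s'_def kb by simp
  qed
  have "h (tv s1 - {(i, s1 i)}) = int (card (tv s1 - {(i, s1 i)}))"
    using hered[OF tv_adm[of s1], of "tv s1 - {(i, s1 i)}"] h1 tv_card[of s1] by auto
  moreover have "card (tv s1 - {(i, s1 i)}) = CARD('n) - 1" by (simp add: tv_card)
  moreover have "h (tv s1 - {(i, s1 i)}) \<le> h X" using mono[OF aX sub1] .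
  moreover have "h X \<le> int CARD('n)" using le_card[OF aX] cX by simp
  moreover have "h X \<noteq> int CARD('n)" using False unfolding X_def s'_def .
  moreover have "CARD('n) \<ge> 1" by (simp add: Suc_leI)
  ultimately have hX: "h X = int CARD('n) - 1" by linarith
  define I0 where "I0 = (tv s1 \<inter> tv s2) \<union> {(i, s2 i)}"
  have I0X: "I0 \<subseteq> X" unfolding I0_def X_def s'_def using i by (auto split: if_splits)
  have I02: "I0 \<subseteq> tv s2" unfolding I0_def by auto
  have hI0: "h I0 = int (card I0)" using hered[OF tv_adm[of s2] _ I02] h2 tv_card[of s2] by auto
  obtain J where J: "I0 \<subseteq> J" "J \<subseteq> X" "h J = int (card J)" "h J = h X"
    using augment[OF aX I0X hI0] by blast
  have cJ: "card J = CARD('n) - 1" using J(3,4) hX by simp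
  have "J \<noteq> X" using cJ cX by (metis One_nat_def Suc_leI diff_less zero_less_card_finite finite less_irrefl_nat UNIV_not_empty zero_less_one)
  then obtain y where y: "y \<in> X" "y \<notin> J" using J(2) by blast
  have JX: "J = X - {y}"
  proof -
    have "J \<subseteq> X - {y}" using J(2) y by blast
    moreover have "card (X - {y}) = card J" using cX cJ y by simp
    ultimately show ?thesis by (simp add: card_subset_eq)
  qed
  obtain j where yj: "y = (j, s' j)" using y(1) unfolding X_def by (cases y) auto
  have yI0: "y \<notin> I0" using J(1) y by blast
  have ji: "j \<noteq> i" using yI0 i unfolding yj I0_def s'_def by auto
  have sj: "s1 j \<noteq> s2 j" using yI0 ji unfolding yj I0_def s'_def by auto
  have aJ: "admissible J" using adm_sub[OF aX J(2)] .
  have bys: "bar y \<notin> J" using J(2) unfolding yj X_def by auto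
  have "2 * h J + 1 \<le> h (insert y J) + h (insert (bar y) J)" using R3[OF aJ y(2) bys] .
  moreover have "insert y J = X" using JX y by blast
  ultimately have g: "h (insert (bar y) J) \<ge> int CARD('n)" using J(3,4) hX cJ by simp
  have eqs: "insert (bar y) J = tv (s1(i := \<not> s1 i, j := \<not> s1 j))"
  proof (rule set_eqI)
    fix x :: "'n \<times> bool"
    obtain k b where x: "x = (k,b)" by (cases x)
    show "x \<in> insert (bar y) J \<longleftrightarrow> x \<in> tv (s1(i := \<not> s1 i, j := \<not> s1 j))"
      unfolding x JX yj X_def s'_def using ji by auto
  qed
  have "h (tv (s1(i := \<not> s1 i, j := \<not> s1 j))) \<le> int CARD('n)" using le_card[OF tv_adm] tv_card by metis
  then show ?thesis using g eqs sj by (intro exI[of _ j]) simp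
qed

lemma F0_VEXCH: "VEXCH (eset ` F0)"
  unfolding VEXCH_def
proof (intro ballI allI impI)
  fix p q i assume p: "p \<in> eset ` F0" and q: "q \<in> eset ` F0" and pq: "p $ i \<noteq> q $ i"
  obtain B1 B2 where B: "B1 \<in> F0" "B2 \<in> F0" "p = eset B1" "q = eset B2" using p q by blast
  obtain s1 where s1: "B1 = tv s1" "h (tv s1) = int CARD('n)" using F0_tv[OF B(1)] by blast
  obtain s2 where s2: "B2 = tv s2" "h (tv s2) = int CARD('n)" using F0_tv[OF B(2)] by blast
  have pk: "p $ k = (if s1 k then 1 else -1)" "q $ k = (if s2 k then 1 else -1)" for k
    unfolding B s1 s2 eset_tv by simp_all
  have "s1 i \<noteq> s2 i" using pq unfolding pk by (cases "s1 i"; cases "s2 i") auto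
  then obtain j where j: "s1 j \<noteq> s2 j" "h (tv (s1(i := \<not> s1 i, j := \<not> s1 j))) = int CARD('n)"
    using EXC[OF s1(2) s2(2)] by blast
  have "p $ j \<noteq> q $ j" using j(1) pk by auto
  moreover have "flip i j p \<in> eset ` F0"
    unfolding B s1 flip_tv using j(2) tv_F0 by blast
  ultimately show "\<exists>j. p $ j \<noteq> q $ j \<and> flip i j p \<in> eset ` F0" by blast
qed

end

lemma arith_flip:
  fixes x1 y1 x2 y2 :: real
  assumes "x1 \<in> {-1,0,1}" "y1 \<in> {-1,0,1}" "x2 \<in> {-1,0,1}" "y2 \<in> {-1,0,1}"
    "x1 \<noteq> 0 \<longrightarrow> y1 = x1" "x2 \<noteq> 0 \<longrightarrow> y2 = x2"
  shows "x1 + x2 < 0 \<Longrightarrow> x1 + y1 + x2 + y2 < 0" "y1 + y2 < 0 \<Longrightarrow> x1 + y1 + x2 + y2 < 0"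
    "x1 < 0 \<Longrightarrow> x1 + y1 < 0" "y1 < 0 \<Longrightarrow> x1 + y1 < 0"
  using assms unfolding insert_iff empty_iff
  by (elim disjE; simp)+

lemma nested:
  fixes V :: "(real^'n::finite) set" and a a' p :: "real^'n"
  assumes fin: "finite V" and cub: "\<forall>p\<in>V. cube p" and ec: "EC (convex hull V)"
    and a: "\<forall>k. a$k \<in> {-1,0,1}" and a': "\<forall>k. a'$k \<in> {-1,0,1}" and aa': "\<forall>k. a$k \<noteq> 0 \<longrightarrow> a'$k = a$k"
    and pV: "p \<in> V" and pmax: "\<forall>q\<in>V. (a + a') \<bullet> q \<le> (a + a') \<bullet> p"
  shows "\<forall>q\<in>V. a \<bullet> q \<le> a \<bullet> p \<and> a' \<bullet> q \<le> a' \<bullet> p"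
proof -
  have cp: "cube p" using cub pV by blast
  define x where "x k = a$k * p$k" for k
  define y where "y k = a'$k * p$k" for k
  have pk: "p$k = 1 \<or> p$k = -1" for k using cp unfolding cube_def by blast
  have xr: "x k \<in> {-1,0,1}" for k using a pk[of k] unfolding x_def by (cases "p$k = 1") auto
  have yr: "y k \<in> {-1,0,1}" for k using a' pk[of k] unfolding y_def by (cases "p$k = 1") auto
  have xy: "x k \<noteq> 0 \<longrightarrow> y k = x k" for k using aa' unfolding x_def y_def by auto
  have fl: "w \<bullet> flip i j p - w \<bullet> p = - 2 * (w$i * p$i) - (if j = i then 0 else 2 * (w$j * p$j))" for w i j
    using flip_inner[of w i j p] by simp
  have sumw: "(a + a') \<bullet> flip i j p - (a + a') \<bullet> p = -2 * (x i + y i) - (if j = i then 0 else 2 * (x j + y j))" for i j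
    unfolding fl x_def y_def by (simp add: algebra_simps)
  have ax: "a \<bullet> flip i j p - a \<bullet> p = -2 * x i - (if j = i then 0 else 2 * x j)" for i j
    unfolding fl x_def by simp
  have ay: "a' \<bullet> flip i j p - a' \<bullet> p = -2 * y i - (if j = i then 0 else 2 * y j)" for i j
    unfolding fl y_def by simp
  show ?thesis
  proof (intro ballI conjI)
    fix q assume qV: "q \<in> V"
    show "a \<bullet> q \<le> a \<bullet> p"
    proof (rule ccontr)
      assume "\<not> ?thesis"
      then obtain r where r: "r \<in> V" "a \<bullet> r > a \<bullet> p" and "\<exists>i j. r = flip i j p"
        using local_global[OF fin cub ec pV qV] by force
      then obtain i j where rij: "r = flip i j p" by blast
      have "(a + a') \<bullet> r \<le> (a + a') \<bullet> p" using pmax r by blast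
      then have le: "-2 * (x i + y i) - (if j = i then 0 else 2 * (x j + y j)) \<le> 0" using sumw[of i j] rij by simp
      have gt: "-2 * x i - (if j = i then 0 else 2 * x j) > 0" using ax[of i j] r rij by simp
      show False
      proof (cases "j = i")
        case True
        then show ?thesis using le gt arith_flip(3)[OF xr[of i] yr[of i] xr[of i] yr[of i] xy[of i] xy[of i]] by simp
      next
        case False
        then show ?thesis using le gt arith_flip(1)[OF xr[of i] yr[of i] xr[of j] yr[of j] xy[of i] xy[of j]] by simp
      qed
    qed
    show "a' \<bullet> q \<le> a' \<bullet> p"
    proof (rule ccontr)
      assume "\<not> ?thesis"
      then obtain r where r: "r \<in> V" "a' \<bullet> r > a' \<bullet> p" and "\<exists>i j. r = flip i j p"
        using local_global[OF fin cub ec pV qV] by force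
      then obtain i j where rij: "r = flip i j p" by blast
      have "(a + a') \<bullet> r \<le> (a + a') \<bullet> p" using pmax r by blast
      then have le: "-2 * (x i + y i) - (if j = i then 0 else 2 * (x j + y j)) \<le> 0" using sumw[of i j] rij by simp
      have gt: "-2 * y i - (if j = i then 0 else 2 * y j) > 0" using ay[of i j] r rij by simp
      show False
      proof (cases "j = i")
        case True
        then show ?thesis using le gt arith_flip(4)[OF xr[of i] yr[of i] xr[of i] yr[of i] xy[of i] xy[of i]] by simp
      next
        case False
        then show ?thesis using le gt arith_flip(2)[OF xr[of i] yr[of i] xr[of j] yr[of j] xy[of i] xy[of j]] by simp
      qed
    qed
  qed
qed


lemma rg_le:
  fixes F :: "('n::finite \<times> bool) set set"
  assumes "B \<in> F"
  shows "eset X \<bullet> eset B \<le> real_of_int (rank_g F X)"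
proof -
  have "int (card (X \<inter> B)) - int (card (barset X \<inter> B)) \<le> rank_g F X"
    unfolding rank_g_def using assms by (intro Max_ge) auto
  then show ?thesis unfolding inner_eset by simp
qed

lemma rg_attain:
  fixes F :: "('n::finite \<times> bool) set set"
  assumes "F \<noteq> {}"
  shows "\<exists>B\<in>F. real_of_int (rank_g F X) = eset X \<bullet> eset B"
proof -
  have "rank_g F X \<in> (\<lambda>B. int (card (X \<inter> B)) - int (card (barset X \<inter> B))) ` F"
    unfolding rank_g_def using assms by (intro Max_in) auto
  then show ?thesis unfolding inner_eset by force
qed

lemma eset_adm_range: "admissible A \<Longrightarrow> eset A $ k \<in> {-1,0,1}"
  unfolding eset_nth adm_iff by auto

lemma eset_sub: "A \<subseteq> A' \<Longrightarrow> admissible A' \<Longrightarrow> eset A $ k \<noteq> 0 \<Longrightarrow> eset A' $ k = eset A $ k"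
  unfolding eset_nth adm_iff by (auto split: if_splits)

lemma eset_sum:
  assumes "admissible S" "admissible T"
  shows "eset S + eset T = eset (S \<inter> T) + eset (sqcup S T)"
  unfolding vec_eq_iff
proof
  fix k
  show "(eset S + eset T) $ k = (eset (S \<inter> T) + eset (sqcup S T)) $ k"
  proof -
    have m: "(k,b) \<in> sqcup S T \<longleftrightarrow> ((k,b) \<in> S \<or> (k,b) \<in> T) \<and> (k,\<not>b) \<notin> S \<and> (k,\<not>b) \<notin> T" for b
      unfolding sqcup_def by auto
    have nS: "\<not> ((k,True) \<in> S \<and> (k,False) \<in> S)" and nT: "\<not> ((k,True) \<in> T \<and> (k,False) \<in> T)"
      using assms unfolding adm_iff by blast+
    show ?thesis unfolding vector_add_component eset_nth m Int_iff using nS nT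
      by (cases "(k,True) \<in> S"; cases "(k,False) \<in> S"; cases "(k,True) \<in> T"; cases "(k,False) \<in> T") simp_all
  qed
qed

lemma card_ineq:
  fixes S T :: "('n::finite \<times> bool) set"
  shows "card (S \<inter> T) + card (sqcup S T) + card (S \<inter> barset T) \<le> card S + card T"
proof -
  have "card S + card T = card (S \<union> T) + card (S \<inter> T)" by (rule card_Un_Int) simp_all
  moreover have "sqcup S T \<inter> (S \<inter> barset T) = {}"
  proof -
    { fix x assume "x \<in> sqcup S T" "x \<in> barset T"
      then have "bar x \<notin> S \<union> T" "bar x \<in> T" unfolding sqcup_def mem_barset by auto
      then have False by blast }
    then show ?thesis by blast
  qed
  then have "card (sqcup S T) + card (S \<inter> barset T) = card (sqcup S T \<union> (S \<inter> barset T))"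
    by (intro card_Un_disjoint[symmetric]) simp_all
  moreover have "card (sqcup S T \<union> (S \<inter> barset T)) \<le> card (S \<union> T)"
    by (rule card_mono) (auto simp: sqcup_def)
  ultimately show ?thesis by linarith
qed

lemma dm_cube:
  fixes F :: "('n::finite \<times> bool) set set"
  assumes "\<forall>B\<in>F. admissible B \<and> card B = CARD('n)"
  shows "\<forall>p\<in>eset ` F. cube p"
proof
  fix p assume "p \<in> eset ` F"
  then obtain B where B: "B \<in> F" "p = eset B" by blast
  then have "B = tv (\<lambda>k. (k,True) \<in> B)" using assms transversal_tv by blast
  then have "p = eset (tv (\<lambda>k. (k,True) \<in> B))" using B by simp
  then show "cube p" unfolding cube_def by (simp add: eset_tv)
qed

lemma forward:
  fixes F :: "('n::finite \<times> bool) set set"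
  assumes dm: "delta_matroid F" and aS: "admissible S" and aT: "admissible T"
  shows "rank_h F S + rank_h F T \<ge> rank_h F (S \<inter> T) + rank_h F (sqcup S T) + real (card (S \<inter> barset T)) / 2"
proof -
  have Fne: "F \<noteq> {}" and tr: "\<forall>B\<in>F. admissible B \<and> card B = CARD('n)"
    and ec: "EC (convex hull (eset ` F))" using dm unfolding delta_matroid_EC by auto
  define V where "V = eset ` F"
  have fin: "finite V" unfolding V_def by simp
  have cub: "\<forall>p\<in>V. cube p" unfolding V_def using dm_cube[OF tr] .
  have ec': "EC (convex hull V)" unfolding V_def using ec .
  define A where "A = S \<inter> T"
  define A' where "A' = sqcup S T"
  have aA: "admissible A" unfolding A_def using adm_sub[OF aS] by blast
  have aA': "admissible A'" unfolding A'_def sqcup_def admissible_def by auto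
  have AA': "A \<subseteq> A'" unfolding A_def A'_def sqcup_def using aS aT unfolding admissible_def by auto
  define a where "a = eset A"
  define a' where "a' = eset A'"
  have ra: "\<forall>k. a$k \<in> {-1,0,1}" unfolding a_def using eset_adm_range[OF aA] by blast
  have ra': "\<forall>k. a'$k \<in> {-1,0,1}" unfolding a'_def using eset_adm_range[OF aA'] by blast
  have raa: "\<forall>k. a$k \<noteq> 0 \<longrightarrow> a'$k = a$k" unfolding a_def a'_def using eset_sub[OF AA' aA'] by blast
  have Vne: "V \<noteq> {}" unfolding V_def using Fne by simp
  have "Max ((\<lambda>q. (a + a') \<bullet> q) ` V) \<in> (\<lambda>q. (a + a') \<bullet> q) ` V" using fin Vne by (intro Max_in) auto
  then obtain p where pV: "p \<in> V" and pM: "(a + a') \<bullet> p = Max ((\<lambda>q. (a + a') \<bullet> q) ` V)" by force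
  have pmax: "\<forall>q\<in>V. (a + a') \<bullet> q \<le> (a + a') \<bullet> p" unfolding pM using fin by simp
  have nst: "\<forall>q\<in>V. a \<bullet> q \<le> a \<bullet> p \<and> a' \<bullet> q \<le> a' \<bullet> p"
    using nested[OF fin cub ec' ra ra' raa pV pmax] .
  obtain Bp where Bp: "Bp \<in> F" "p = eset Bp" using pV unfolding V_def by blast
  have gA: "real_of_int (rank_g F A) = a \<bullet> p"
  proof -
    obtain B0 where "B0 \<in> F" "real_of_int (rank_g F A) = a \<bullet> eset B0" using rg_attain[OF Fne] unfolding a_def by blast
    moreover have "a \<bullet> eset B0 \<le> a \<bullet> p" using nst \<open>B0 \<in> F\<close> unfolding V_def by blast
    moreover have "a \<bullet> p \<le> real_of_int (rank_g F A)" using rg_le[OF Bp(1)] Bp(2) unfolding a_def by simp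
    ultimately show ?thesis by linarith
  qed
  have gA': "real_of_int (rank_g F A') = a' \<bullet> p"
  proof -
    obtain B0 where "B0 \<in> F" "real_of_int (rank_g F A') = a' \<bullet> eset B0" using rg_attain[OF Fne] unfolding a'_def by blast
    moreover have "a' \<bullet> eset B0 \<le> a' \<bullet> p" using nst \<open>B0 \<in> F\<close> unfolding V_def by blast
    moreover have "a' \<bullet> p \<le> real_of_int (rank_g F A')" using rg_le[OF Bp(1)] Bp(2) unfolding a'_def by simp
    ultimately show ?thesis by linarith
  qed
  have gS: "eset S \<bullet> p \<le> real_of_int (rank_g F S)" using rg_le[OF Bp(1)] Bp(2) by simp
  have gT: "eset T \<bullet> p \<le> real_of_int (rank_g F T)" using rg_le[OF Bp(1)] Bp(2) by simp
  have "eset S \<bullet> p + eset T \<bullet> p = a \<bullet> p + a' \<bullet> p"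
    using eset_sum[OF aS aT] unfolding a_def a'_def A_def A'_def by (metis inner_add_left)
  then have g: "real_of_int (rank_g F A) + real_of_int (rank_g F A') \<le> real_of_int (rank_g F S) + real_of_int (rank_g F T)"
    using gA gA' gS gT by linarith
  have c: "real (card A) + real (card A') + real (card (S \<inter> barset T)) \<le> real (card S) + real (card T)"
    using card_ineq[of S T] unfolding A_def A'_def by linarith
  show ?thesis using g c unfolding rank_h_def A_def A'_def by (simp add: field_simps)
qed

lemma h_empty: "F \<noteq> {} \<Longrightarrow> rank_h F {} = 0"
  unfolding rank_h_def rank_g_def barset_def by (simp add: image_constant_conv)

lemma h_single:
  fixes F :: "('n::finite \<times> bool) set set"
  assumes dm: "delta_matroid F" and aS: "admissible S" and cS: "card S = 1"
  shows "rank_h F S \<in> {0, 1}"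
proof -
  have Fne: "F \<noteq> {}" and tr: "\<forall>B\<in>F. admissible B \<and> card B = CARD('n)"
    using dm unfolding delta_matroid_EC by auto
  obtain x where Sx: "S = {x}" using cS card_1_singletonE by blast
  have t: "int (card (S \<inter> B)) - int (card (barset S \<inter> B)) \<in> {-1, 1}" if "B \<in> F" for B
  proof -
    have "B = tv (\<lambda>k. (k,True) \<in> B)" using tr that transversal_tv by blast
    then obtain s where B: "B = tv s" by blast
    obtain k b where x: "x = (k,b)" by (cases x)
    have "barset S = {(k, \<not> b)}" unfolding Sx x barset_def by simp
    then show ?thesis unfolding B Sx x by (cases "b = s k") auto
  qed
  have "rank_g F S \<in> (\<lambda>B. int (card (S \<inter> B)) - int (card (barset S \<inter> B))) ` F"
    unfolding rank_g_def using Fne by (intro Max_in) auto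
  then obtain B where "B \<in> F" "rank_g F S = int (card (S \<inter> B)) - int (card (barset S \<inter> B))" by blast
  then have "rank_g F S \<in> {-1, 1}" using t by simp
  then show ?thesis unfolding rank_h_def cS by auto
qed

theorem corollary2p9:
  fixes h :: "('n::finite \<times> bool) set \<Rightarrow> int"
  shows "(\<exists>F. delta_matroid F \<and> (\<forall>S. admissible S \<longrightarrow> real_of_int (h S) = rank_h F S))
         \<longleftrightarrow>
         (h {} = 0 \<and>
          (\<forall>S. admissible S \<and> card S = 1 \<longrightarrow> h S \<in> {0, 1}) \<and>
          (\<forall>S T. admissible S \<longrightarrow> admissible T \<longrightarrow>
              real_of_int (h S) + real_of_int (h T)
                \<ge> real_of_int (h (S \<inter> T)) + real_of_int (h (sqcup S T))
                   + real (card (S \<inter> barset T)) / 2))"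
proof
  assume "\<exists>F. delta_matroid F \<and> (\<forall>S. admissible S \<longrightarrow> real_of_int (h S) = rank_h F S)"
  then obtain F where dm: "delta_matroid F" and hF: "\<forall>S. admissible S \<longrightarrow> real_of_int (h S) = rank_h F S"
    by blast
  have Fne: "F \<noteq> {}" using dm unfolding delta_matroid_def by blast
  have ae: "admissible ({}::('n \<times> bool) set)" unfolding admissible_def by simp
  have "real_of_int (h {}) = 0" using hF ae h_empty[OF Fne] by simp
  then have 1: "h {} = 0" by simp
  have 2: "\<forall>S. admissible S \<and> card S = 1 \<longrightarrow> h S \<in> {0, 1}"
  proof (intro allI impI)
    fix S :: "('n \<times> bool) set" assume "admissible S \<and> card S = 1"
    then have "rank_h F S \<in> {0,1}" "real_of_int (h S) = rank_h F S" using h_single[OF dm] hF by auto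
    then show "h S \<in> {0,1}" by auto
  qed
  have 3: "\<forall>S T. admissible S \<longrightarrow> admissible T \<longrightarrow>
              real_of_int (h S) + real_of_int (h T)
                \<ge> real_of_int (h (S \<inter> T)) + real_of_int (h (sqcup S T))
                   + real (card (S \<inter> barset T)) / 2"
  proof (intro allI impI)
    fix S T :: "('n \<times> bool) set" assume aS: "admissible S" and aT: "admissible T"
    have aI: "admissible (S \<inter> T)" using adm_sub[OF aS] by blast
    have aU: "admissible (sqcup S T)" unfolding sqcup_def admissible_def by auto
    show "real_of_int (h S) + real_of_int (h T)
                \<ge> real_of_int (h (S \<inter> T)) + real_of_int (h (sqcup S T))
                   + real (card (S \<inter> barset T)) / 2"
      using forward[OF dm aS aT] hF aS aT aI aU by simp
  qed
  show "h {} = 0 \<and> (\<forall>S. admissible S \<and> card S = 1 \<longrightarrow> h S \<in> {0, 1}) \<and>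
          (\<forall>S T. admissible S \<longrightarrow> admissible T \<longrightarrow>
              real_of_int (h S) + real_of_int (h T)
                \<ge> real_of_int (h (S \<inter> T)) + real_of_int (h (sqcup S T))
                   + real (card (S \<inter> barset T)) / 2)"
    using 1 2 3 by blast
next
  assume H: "h {} = 0 \<and>
          (\<forall>S. admissible S \<and> card S = 1 \<longrightarrow> h S \<in> {0, 1}) \<and>
          (\<forall>S T. admissible S \<longrightarrow> admissible T \<longrightarrow>
              real_of_int (h S) + real_of_int (h T)
                \<ge> real_of_int (h (S \<inter> T)) + real_of_int (h (sqcup S T))
                   + real (card (S \<inter> barset T)) / 2)"
  interpret hfun h using H by unfold_locales auto
  have tr: "\<forall>B\<in>F0. admissible B \<and> card B = CARD('n)" unfolding F0_def by blast
  have "EC (convex hull (eset ` F0))"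
    using exch_EC[OF _ dm_cube[OF tr] F0_VEXCH] by simp
  then have "delta_matroid F0" unfolding delta_matroid_EC using F0_ne tr by blast
  moreover have "\<forall>S. admissible S \<longrightarrow> real_of_int (h S) = rank_h F0 S" using rank_eq by simp
  ultimately show "\<exists>F. delta_matroid F \<and> (\<forall>S. admissible S \<longrightarrow> real_of_int (h S) = rank_h F S)" by blast
qed

end
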